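(* Let $(X,\mathcal{M})$ be a measurable space and $K_x(dx')$ a probability kernel from $X$ to $X$. Define $S_K[f](x)=\int f(x')K_x(dx')$ for $f\in\mathcal{M}_b(X)$, $S^K[P]=\int K_x(\cdot)P(dx)$ for $P\in\mathcal{P}(X)$, and $\mathcal{P}_K(X)=\{P\in\mathcal{P}(X):S^K[P]=P\}$. Let $Q,P\in\mathcal{P}_K(X)$. (i) If $\Gamma\subset\mathcal{M}_b(X)$ with $S_K[\Gamma]\subset\Gamma$, then $D_f^\Gamma(Q\|P)=D_f^{S_K[\Gamma]}(Q\|P)$ and $W^\Gamma(Q,P)=W^{S_K[\Gamma]}(Q,P)$. (ii) If $\Gamma\subset\mathcal{M}_b(X)^2$ with $S_K[\Gamma]\subset\Gamma$ (componentwise) and the cost satisfies $S_K[c(\cdot,y)]=c(\cdot,y)$ and $S_K[c(x,\cdot)]=c(x,\cdot)$ for all $x,y\in X$, then $\mathcal{SD}^\Gamma_{c,\epsilon}(Q,P)=\mathcal{SD}^{S_K[\Gamma]}_{c,\epsilon}(Q,P)$. (iii) If moreover $S_K\circ S_K=S_K$ and $S_K[\Gamma]\subset\Gamma$, then $S_K[\Gamma]=\Gamma^{\mathrm{inv}}_K:=\{\gamma\in\Gamma:S_K[\gamma]=\gamma\}$.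
   Context: $f:[0,\infty)\to\mathbb{R}$ convex, lower semicontinuous, $f(1)=0$, strictly convex at $1$; $f^*$ its Legendre transform. $D_f^\Gamma(Q\|P)=\sup_{\gamma\in\Gamma}\{E_Q[\gamma]-\inf_{\nu\in\mathbb{R}}(\nu+E_P[f^*(\gamma-\nu)])\}$; $W^\Gamma(Q,P)=\sup_{\gamma\in\Gamma}\{E_Q[\gamma]-E_P[\gamma]\}$. For measurable cost $c:X\times X\to[0,\infty)$, $\epsilon>0$, $\Gamma$ a set of pairs: $W^\Gamma_{c,\epsilon}(Q,P)=\sup_{(\gamma_1,\gamma_2)\in\Gamma}\{E_P[\gamma_1]+E_Q[\gamma_2]-\epsilon E_{P\times Q}[\exp((\gamma_1(x)+\gamma_2(y)-c(x,y))/\epsilon)]+\epsilon\}$ and $\mathcal{SD}^\Gamma_{c,\epsilon}(Q,P)=W^\Gamma_{c,\epsilon}(Q,P)-\frac12W^\Gamma_{c,\epsilon}(Q,Q)-\frac12W^\Gamma_{c,\epsilon}(P,P)$. *)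

theory Defs
  imports "HOL-Probability.Probability"
begin

definition Mb :: "'a measure \<Rightarrow> ('a \<Rightarrow> real) set" where
  "Mb M = {g. g \<in> borel_measurable M \<and> (\<exists>B. \<forall>x\<in>space M. \<bar>g x\<bar> \<le> B)}"

definition probs :: "'a measure \<Rightarrow> 'a measure set" where
  "probs M = {P. prob_space P \<and> sets P = sets M}"

definition SK :: "('a \<Rightarrow> 'a measure) \<Rightarrow> ('a \<Rightarrow> real) \<Rightarrow> ('a \<Rightarrow> real)" where
  "SK K g = (\<lambda>x. \<integral>x'. g x' \<partial>(K x))"

definition SupK :: "('a \<Rightarrow> 'a measure) \<Rightarrow> 'a measure \<Rightarrow> 'a measure" where
  "SupK K P = bind P K"

definition invariant_probs :: "'a measure \<Rightarrow> ('a \<Rightarrow> 'a measure) \<Rightarrow> 'a measure set" where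
  "invariant_probs M K = {P \<in> probs M. SupK K P = P}"

definition prob_kernel :: "'a measure \<Rightarrow> ('a \<Rightarrow> 'a measure) \<Rightarrow> bool" where
  "prob_kernel M K \<longleftrightarrow> K \<in> M \<rightarrow>\<^sub>M prob_algebra M"

definition SK2 :: "('a \<Rightarrow> 'a measure) \<Rightarrow> ('a \<Rightarrow> real) \<times> ('a \<Rightarrow> real) \<Rightarrow> ('a \<Rightarrow> real) \<times> ('a \<Rightarrow> real)" where
  "SK2 K p = (SK K (fst p), SK K (snd p))"

definition lsc_nonneg :: "(real \<Rightarrow> real) \<Rightarrow> bool" where
  "lsc_nonneg f \<longleftrightarrow> (\<forall>x\<ge>0. \<forall>c<f x. eventually (\<lambda>y. c < f y) (at x within {0..}))"

definition strictly_convex_at :: "(real \<Rightarrow> real) \<Rightarrow> real \<Rightarrow> bool" where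
  "strictly_convex_at f z \<longleftrightarrow>
     (\<forall>x\<ge>0. \<forall>y\<ge>0. \<forall>t. 0 < t \<and> t < 1 \<and> x \<noteq> y \<and> t * x + (1 - t) * y = z
        \<longrightarrow> f z < t * f x + (1 - t) * f y)"

definition admissible_f :: "(real \<Rightarrow> real) \<Rightarrow> bool" where
  "admissible_f f \<longleftrightarrow> convex_on {0..} f \<and> lsc_nonneg f \<and> f 1 = 0 \<and> strictly_convex_at f 1"

definition fstar :: "(real \<Rightarrow> real) \<Rightarrow> real \<Rightarrow> ereal" where
  "fstar f y = (SUP x\<in>{0..}. ereal (x * y - f x))"

definition eintegral :: "'a measure \<Rightarrow> ('a \<Rightarrow> ereal) \<Rightarrow> ereal" where
  "eintegral M g = enn2ereal (\<integral>\<^sup>+ x. e2ennreal (g x) \<partial>M) - enn2ereal (\<integral>\<^sup>+ x. e2ennreal (- g x) \<partial>M)"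

definition Df :: "(real \<Rightarrow> real) \<Rightarrow> ('a \<Rightarrow> real) set \<Rightarrow> 'a measure \<Rightarrow> 'a measure \<Rightarrow> ereal" where
  "Df f \<Gamma> Q P = (SUP \<gamma>\<in>\<Gamma>. ereal (\<integral>x. \<gamma> x \<partial>Q)
      - (INF \<nu>::real. ereal \<nu> + eintegral P (\<lambda>x. fstar f (\<gamma> x - \<nu>))))"

definition WG :: "('a \<Rightarrow> real) set \<Rightarrow> 'a measure \<Rightarrow> 'a measure \<Rightarrow> ereal" where
  "WG \<Gamma> Q P = (SUP \<gamma>\<in>\<Gamma>. ereal ((\<integral>x. \<gamma> x \<partial>Q) - (\<integral>x. \<gamma> x \<partial>P)))"

definition Wce :: "('a \<Rightarrow> 'a \<Rightarrow> real) \<Rightarrow> real \<Rightarrow> (('a \<Rightarrow> real) \<times> ('a \<Rightarrow> real)) set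
    \<Rightarrow> 'a measure \<Rightarrow> 'a measure \<Rightarrow> ereal" where
  "Wce c \<epsilon> \<Gamma> Q P = (SUP g\<in>\<Gamma>. ereal ((\<integral>x. fst g x \<partial>P) + (\<integral>y. snd g y \<partial>Q)
      - \<epsilon> * (\<integral>z. exp ((fst g (fst z) + snd g (snd z) - c (fst z) (snd z)) / \<epsilon>) \<partial>(P \<Otimes>\<^sub>M Q)) + \<epsilon>))"

definition SD :: "('a \<Rightarrow> 'a \<Rightarrow> real) \<Rightarrow> real \<Rightarrow> (('a \<Rightarrow> real) \<times> ('a \<Rightarrow> real)) set
    \<Rightarrow> 'a measure \<Rightarrow> 'a measure \<Rightarrow> ereal" where
  "SD c \<epsilon> \<Gamma> Q P = Wce c \<epsilon> \<Gamma> Q P - ereal (1/2) * Wce c \<epsilon> \<Gamma> Q Q - ereal (1/2) * Wce c \<epsilon> \<Gamma> P P"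

end

theory Submission
  imports Defs
begin

lemma kernel_facts:
  assumes K: "prob_kernel M K" and x: "x \<in> space M"
  shows "prob_space (K x)" "sets (K x) = sets M" "space (K x) = space M"
proof -
  have "K x \<in> space (prob_algebra M)" using K x unfolding prob_kernel_def by (auto dest: measurable_space)
  then show "prob_space (K x)" "sets (K x) = sets M" by (auto simp: space_prob_algebra)
  then show "space (K x) = space M" by (auto dest: sets_eq_imp_space_eq)
qed

lemma probs_facts:
  assumes P: "P \<in> invariant_probs M K"
  shows "prob_space P" "sets P = sets M" "space P = space M" "bind P K = P"
  using P by (auto simp: invariant_probs_def probs_def SupK_def dest: sets_eq_imp_space_eq)

lemma kernel_meas:
  assumes K: "prob_kernel M K" and P: "P \<in> invariant_probs M K"
  shows "K \<in> measurable P (subprob_algebra M)"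
proof -
  have "K \<in> measurable M (subprob_algebra M)" using K unfolding prob_kernel_def by (rule measurable_prob_algebraD)
  then show ?thesis by (subst measurable_cong_sets[OF probs_facts(2)[OF P] refl])
qed

lemma inv_integral:
  assumes K: "prob_kernel M K" and P: "P \<in> invariant_probs M K"
  and h: "h \<in> borel_measurable M" and B: "\<forall>x\<in>space M. \<bar>h x\<bar> \<le> B"
  shows "(\<integral>x. h x \<partial>P) = (\<integral>x. SK K h x \<partial>P)"
proof -
  interpret prob_space P using probs_facts[OF P] by simp
  have "(\<integral>x. h x \<partial>P) = (\<integral>x. h x \<partial>(bind P K))" using probs_facts(4)[OF P] by simp
  also have "\<dots> = (\<integral>x. integral\<^sup>L (K x) h \<partial>P)"
  proof (rule integral_bind[where K=M and B=B and B'=1])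
    show "h \<in> borel_measurable M" by fact
    show "\<And>x. x \<in> space M \<Longrightarrow> \<bar>h x\<bar> \<le> B" using B by auto
    show "K \<in> measurable P (subprob_algebra M)" by (rule kernel_meas[OF K P])
    show "finite_measure P" by unfold_locales
    show "AE x in P. emeasure (K x) (space (K x)) \<le> ennreal 1"
    proof (rule AE_I2)
      fix x assume "x \<in> space P"
      then have x: "x \<in> space M" using probs_facts(3)[OF P] by simp
      show "emeasure (K x) (space (K x)) \<le> ennreal 1"
        using prob_space.emeasure_space_1[OF kernel_facts(1)[OF K x]] by simp
    qed
  qed
  finally show ?thesis unfolding SK_def .
qed

lemma inv_nn_integral:
  assumes K: "prob_kernel M K" and P: "P \<in> invariant_probs M K"
  and h: "h \<in> borel_measurable M"
  shows "(\<integral>\<^sup>+x. h x \<partial>P) = (\<integral>\<^sup>+x. (\<integral>\<^sup>+y. h y \<partial>K x) \<partial>P)"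
proof -
  have "(\<integral>\<^sup>+x. h x \<partial>P) = (\<integral>\<^sup>+x. h x \<partial>(bind P K))" using probs_facts(4)[OF P] by simp
  also have "\<dots> = (\<integral>\<^sup>+x. (\<integral>\<^sup>+y. h y \<partial>K x) \<partial>P)"
    by (rule nn_integral_bind[OF h kernel_meas[OF K P]])
  finally show ?thesis .
qed

lemma upclosed_borel:
  fixes S :: "real set"
  assumes up: "\<And>x y. x \<in> S \<Longrightarrow> x \<le> y \<Longrightarrow> y \<in> S"
  shows "S \<in> sets borel"
proof (cases "S = {}")
  case True then show ?thesis by simp
next
  case ne: False
  show ?thesis
  proof (cases "bdd_below S")
    case bdd: True
    define a where "a = Inf S"
    have low: "\<And>x. x \<in> S \<Longrightarrow> a \<le> x" unfolding a_def using bdd by (simp add: cInf_lower)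
    show ?thesis
    proof (cases "a \<in> S")
      case True
      have "S = {a..}" using low up True by auto
      then show ?thesis by simp
    next
      case False
      have "S = {a<..}"
      proof
        show "S \<subseteq> {a<..}" using low False by (force simp: less_le)
        show "{a<..} \<subseteq> S"
        proof
          fix y assume "y \<in> {a<..}"
          then have "Inf S < y" by (simp add: a_def)
          then obtain x where "x \<in> S" "x < y" using cInf_less_iff[OF ne bdd] by auto
          then show "y \<in> S" using up by auto
        qed
      qed
      then show ?thesis by simp
    qed
  next
    case False
    have "S = UNIV"
    proof (rule set_eqI, rule iffI)
      fix y assume "y \<in> (UNIV::real set)"
      from False obtain x where "x \<in> S" "x < y" unfolding bdd_below_def
        by (meson not_le)
      then show "y \<in> S" using up by auto
    qed simp
    then show ?thesis by simp
  qed
qed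

lemma fstar_mono: assumes "y \<le> y'" shows "fstar f y \<le> fstar f y'"
  using assms unfolding fstar_def
proof (intro SUP_mono)
  fix n :: real assume "n \<in> {0..}" "y \<le> y'"
  then show "\<exists>m\<in>{0..}. ereal (n * y - f n) \<le> ereal (m * y' - f m)"
    by (intro bexI[of _ n]) (auto intro: mult_left_mono)
qed

lemma fstar_ge: "f 1 = 0 \<Longrightarrow> ereal y \<le> fstar f y"
  unfolding fstar_def
  by (rule SUP_upper2[where i=1]) auto

lemma fstar_borel: "fstar f \<in> borel_measurable borel"
proof (rule borel_measurableI_greater)
  fix t :: ereal
  have "{x. t < fstar f x} \<in> sets borel"
  proof (rule upclosed_borel)
    fix x y assume "x \<in> {x. t < fstar f x}" "x \<le> y"
    then show "y \<in> {x. t < fstar f x}" using fstar_mono[of x y f] by simp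
  qed
  then show "{x \<in> space borel. t < fstar f x} \<in> sets borel" by simp
qed

lemma e2_split:
  fixes a :: ereal and C :: real
  assumes "C \<ge> 0" "- ereal C \<le> a"
  shows "e2ennreal (a + ereal C) = e2ennreal a + (ennreal C - e2ennreal (- a))"
proof (cases a)
  case (real r)
  show ?thesis
  proof (cases "r \<ge> 0")
    case True
    have "e2ennreal (a + ereal C) = ennreal (r + C)" using real by simp
    also have "\<dots> = ennreal r + ennreal C" using True assms(1) by (rule ennreal_plus)
    also have "e2ennreal (- a) = 0" using real True by (simp add: ennreal_neg)
    ultimately show ?thesis using real by simp
  next
    case False
    then have "ennreal C - ennreal (- r) = ennreal (C + r)" using ennreal_minus[of "-r" C] by simp
    moreover have "e2ennreal a = 0" using real False by (simp add: ennreal_neg)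
    moreover have "e2ennreal (- a) = ennreal (- r)" using real by simp
    moreover have "e2ennreal (a + ereal C) = ennreal (C + r)" using real by (simp add: add.commute)
    ultimately show ?thesis by simp
  qed
next
  case PInf then show ?thesis by simp
next
  case MInf then show ?thesis using assms by simp
qed

lemma eintegral_shift:
  fixes g :: "'a \<Rightarrow> ereal"
  assumes N: "prob_space N" and g: "g \<in> borel_measurable N" and C: "C \<ge> 0"
    and lb: "\<And>x. x \<in> space N \<Longrightarrow> - ereal C \<le> g x"
  shows "eintegral N g = enn2ereal (\<integral>\<^sup>+x. e2ennreal (g x + ereal C) \<partial>N) - ereal C"
proof -
  interpret prob_space N by fact
  let ?X = "\<integral>\<^sup>+x. e2ennreal (g x) \<partial>N"
  let ?Y = "\<integral>\<^sup>+x. e2ennreal (- g x) \<partial>N"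
  have m1: "(\<lambda>x. e2ennreal (g x)) \<in> borel_measurable N" using g by measurable
  have m2: "(\<lambda>x. e2ennreal (- g x)) \<in> borel_measurable N" using g by measurable
  have bnd: "e2ennreal (- g x) \<le> ennreal C" if "x \<in> space N" for x
  proof -
    have "- g x \<le> ereal C" using lb[OF that] by (simp add: ereal_uminus_le_reorder)
    then have "e2ennreal (- g x) \<le> e2ennreal (ereal C)" by (rule e2ennreal_mono)
    then show ?thesis by simp
  qed
  have Yle: "?Y \<le> ennreal C"
  proof -
    have "?Y \<le> (\<integral>\<^sup>+x. ennreal C \<partial>N)" using bnd by (intro nn_integral_mono) auto
    also have "\<dots> = ennreal C" by (simp add: emeasure_space_1)
    finally show ?thesis .
  qed
  obtain y where y0: "?Y = ennreal y" "0 \<le> y"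
    using Yle by (cases ?Y rule: ennreal_cases) (auto simp: top_unique)
  with Yle C have y: "?Y = ennreal y" "0 \<le> y" "y \<le> C" by auto
  have "(\<integral>\<^sup>+x. e2ennreal (g x + ereal C) \<partial>N)
      = (\<integral>\<^sup>+x. e2ennreal (g x) + (ennreal C - e2ennreal (- g x)) \<partial>N)"
    using lb C by (intro nn_integral_cong e2_split) auto
  also have "\<dots> = ?X + (\<integral>\<^sup>+x. ennreal C - e2ennreal (- g x) \<partial>N)"
    using m1 m2 by (intro nn_integral_add) auto
  also have "(\<integral>\<^sup>+x. ennreal C - e2ennreal (- g x) \<partial>N) = (\<integral>\<^sup>+x. ennreal C \<partial>N) - ?Y"
    using m2 y bnd by (intro nn_integral_diff) (auto intro!: AE_I2)
  also have "(\<integral>\<^sup>+x. ennreal C \<partial>N) = ennreal C" by (simp add: emeasure_space_1)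
  finally have eq0: "(\<integral>\<^sup>+x. e2ennreal (g x + ereal C) \<partial>N) = ?X + (ennreal C - ennreal y)"
    unfolding y(1) .
  have "ennreal C - ennreal y = ennreal (C - y)" using y(2) by (rule ennreal_minus)
  with eq0 have eq: "(\<integral>\<^sup>+x. e2ennreal (g x + ereal C) \<partial>N) = ?X + ennreal (C - y)" by simp
  have L: "eintegral N g = enn2ereal ?X - ereal y" unfolding eintegral_def y(1) using y(2) by simp
  show ?thesis
  proof (cases "?X = \<infinity>")
    case True
    then show ?thesis unfolding L eq by simp
  next
    case False
    then obtain x where x: "?X = ennreal x" "0 \<le> x" by (cases ?X rule: ennreal_cases) auto
    have sum: "?X + ennreal (C - y) = ennreal (x + (C - y))" unfolding x(1) using x(2) y(3)
      by (intro ennreal_plus[symmetric]) simp_all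
    have s2: "enn2ereal (?X + ennreal (C - y)) = ereal (x + (C - y))"
      unfolding sum using x(2) y(3) by (intro enn2ereal_ennreal) simp
    have s3: "enn2ereal ?X = ereal x" unfolding x(1) using x(2) by (rule enn2ereal_ennreal)
    show ?thesis unfolding L eq s2 s3 by simp
  qed
qed

lemma int_le_nn:
  fixes u :: "'a \<Rightarrow> real"
  assumes u: "integrable N u"
  shows "ereal (\<integral>x. u x \<partial>N) \<le> enn2ereal (\<integral>\<^sup>+x. ennreal (u x) \<partial>N)"
proof -
  have i2: "integrable N (\<lambda>x. max 0 (u x))" using u by auto
  have "(\<integral>\<^sup>+x. ennreal (u x) \<partial>N) = (\<integral>\<^sup>+x. ennreal (max 0 (u x)) \<partial>N)"
    by (intro nn_integral_cong) (auto simp: max_def ennreal_neg)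
  also have "\<dots> = ennreal (\<integral>x. max 0 (u x) \<partial>N)"
    using i2 by (intro nn_integral_eq_integral) auto
  finally have e: "enn2ereal (\<integral>\<^sup>+x. ennreal (u x) \<partial>N) = ereal (\<integral>x. max 0 (u x) \<partial>N)"
    by (simp add: integral_nonneg_AE)
  have "(\<integral>x. u x \<partial>N) \<le> (\<integral>x. max 0 (u x) \<partial>N)"
    using u i2 by (intro integral_mono) auto
  then show ?thesis unfolding e by simp
qed

lemma fstar_jensen:
  assumes N: "prob_space N" and h: "integrable N h" and f1: "f 1 = 0" and C: "C \<ge> 0"
  shows "e2ennreal (fstar f (\<integral>x. h x \<partial>N) + ereal C)
     \<le> (\<integral>\<^sup>+y. e2ennreal (fstar f (h y) + ereal C) \<partial>N)" (is "_ \<le> ?R")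
proof -
  interpret prob_space N by fact
  have "fstar f (\<integral>x. h x \<partial>N) \<le> enn2ereal ?R - ereal C"
    unfolding fstar_def[of f "\<integral>x. h x \<partial>N"]
  proof (rule SUP_least)
    fix t :: real assume t: "t \<in> {0..}"
    have "ereal (t * (\<integral>x. h x \<partial>N) - f t) + ereal C = ereal (\<integral>y. t * h y + (C - f t) \<partial>N)"
      using h by (simp add: prob_space)
    also have "\<dots> \<le> enn2ereal (\<integral>\<^sup>+y. ennreal (t * h y + (C - f t)) \<partial>N)"
      using h by (intro int_le_nn) auto
    also have "\<dots> \<le> enn2ereal ?R"
      unfolding less_eq_ennreal.rep_eq[symmetric]
    proof (intro nn_integral_mono)
      fix y
      have "ereal (t * h y - f t) \<le> fstar f (h y)"
        unfolding fstar_def using t by (intro SUP_upper) auto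
      then have "ereal (t * h y - f t) + ereal C \<le> fstar f (h y) + ereal C"
        by (rule add_right_mono)
      then have "e2ennreal (ereal (t * h y - f t) + ereal C) \<le> e2ennreal (fstar f (h y) + ereal C)"
        by (rule e2ennreal_mono)
      then show "ennreal (t * h y + (C - f t)) \<le> e2ennreal (fstar f (h y) + ereal C)"
        by (simp add: algebra_simps)
    qed
    finally show "ereal (t * (\<integral>x. h x \<partial>N) - f t) \<le> enn2ereal ?R - ereal C"
      by (simp add: ereal_le_minus)
  qed
  then have "fstar f (\<integral>x. h x \<partial>N) + ereal C \<le> enn2ereal ?R"
    by (simp add: ereal_le_minus)
  then have "e2ennreal (fstar f (\<integral>x. h x \<partial>N) + ereal C) \<le> e2ennreal (enn2ereal ?R)"
    by (rule e2ennreal_mono)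
  then show ?thesis by simp
qed

lemma bdd_integrable:
  fixes g :: "'a \<Rightarrow> real"
  assumes N: "prob_space N" and sN: "sets N = sets M" and g: "g \<in> borel_measurable M"
    and B: "\<And>x. x \<in> space M \<Longrightarrow> \<bar>g x\<bar> \<le> B"
  shows "integrable N g"
proof -
  interpret prob_space N by fact
  have sp: "space N = space M" using sN by (rule sets_eq_imp_space_eq)
  show ?thesis
  proof (rule integrable_const_bound[where B=B])
    show "AE x in N. norm (g x) \<le> B" using B sp by (intro AE_I2) auto
    show "g \<in> borel_measurable N" using g by (subst measurable_cong_sets[OF sN refl])
  qed
qed

lemma Mb_integrable:
  assumes "g \<in> Mb M" "prob_space N" "sets N = sets M"
  shows "integrable N g"
proof -
  from assms(1) obtain B where gm: "g \<in> borel_measurable M" and B: "\<And>x. x \<in> space M \<Longrightarrow> \<bar>g x\<bar> \<le> B"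
    unfolding Mb_def by auto
  show ?thesis by (rule bdd_integrable[OF assms(2,3) gm B])
qed

lemma Df_term_le:
  assumes K: "prob_kernel M K" and P: "P \<in> invariant_probs M K" and f1: "f 1 = 0"
    and g: "\<gamma> \<in> Mb M" and sg: "SK K \<gamma> \<in> Mb M"
  shows "eintegral P (\<lambda>x. fstar f (SK K \<gamma> x - \<nu>)) \<le> eintegral P (\<lambda>x. fstar f (\<gamma> x - \<nu>))"
proof -
  from g obtain B1 where gm: "\<gamma> \<in> borel_measurable M" and B1: "\<And>x. x \<in> space M \<Longrightarrow> \<bar>\<gamma> x\<bar> \<le> B1"
    unfolding Mb_def by auto
  from sg obtain B2 where sgm: "SK K \<gamma> \<in> borel_measurable M" and B2: "\<And>x. x \<in> space M \<Longrightarrow> \<bar>SK K \<gamma> x\<bar> \<le> B2"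
    unfolding Mb_def by auto
  define C where "C = \<bar>B1\<bar> + \<bar>B2\<bar> + \<bar>\<nu>\<bar>"
  have C0: "C \<ge> 0" unfolding C_def by simp
  have PP: "prob_space P" and sP: "sets P = sets M" and spP: "space P = space M"
    using probs_facts[OF P] by auto
  have mc: "\<And>u. u \<in> borel_measurable M \<Longrightarrow> (\<lambda>x. fstar f (u x - \<nu>)) \<in> borel_measurable P"
  proof -
    fix u :: "'a \<Rightarrow> real" assume "u \<in> borel_measurable M"
    then have "(\<lambda>x. u x - \<nu>) \<in> borel_measurable M" by measurable
    then have "(\<lambda>x. u x - \<nu>) \<in> borel_measurable P" by (subst measurable_cong_sets[OF sP refl])
    then show "(\<lambda>x. fstar f (u x - \<nu>)) \<in> borel_measurable P"
      by (rule measurable_compose[OF _ fstar_borel])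
  qed
  have lb: "\<And>u B x. x \<in> space M \<Longrightarrow> \<bar>u x\<bar> \<le> B \<Longrightarrow> \<bar>B\<bar> \<le> C - \<bar>\<nu>\<bar> \<Longrightarrow> - ereal C \<le> fstar f (u x - \<nu>)"
  proof -
    fix u :: "'a \<Rightarrow> real" and B x assume "\<bar>u x\<bar> \<le> B" "\<bar>B\<bar> \<le> C - \<bar>\<nu>\<bar>"
    then have "- C \<le> u x - \<nu>" by linarith
    then have "- ereal C \<le> ereal (u x - \<nu>)" by simp
    also have "\<dots> \<le> fstar f (u x - \<nu>)" using f1 by (rule fstar_ge)
    finally show "- ereal C \<le> fstar f (u x - \<nu>)" .
  qed
  have e1: "eintegral P (\<lambda>x. fstar f (SK K \<gamma> x - \<nu>))
      = enn2ereal (\<integral>\<^sup>+x. e2ennreal (fstar f (SK K \<gamma> x - \<nu>) + ereal C) \<partial>P) - ereal C"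
  proof (rule eintegral_shift[OF PP mc[OF sgm] C0])
    fix x assume "x \<in> space P"
    then have x: "x \<in> space M" using spP by simp
    show "- ereal C \<le> fstar f (SK K \<gamma> x - \<nu>)" by (rule lb[of x "SK K \<gamma>" B2, OF x B2[OF x]]) (simp add: C_def)
  qed
  have e2: "eintegral P (\<lambda>x. fstar f (\<gamma> x - \<nu>))
      = enn2ereal (\<integral>\<^sup>+x. e2ennreal (fstar f (\<gamma> x - \<nu>) + ereal C) \<partial>P) - ereal C"
  proof (rule eintegral_shift[OF PP mc[OF gm] C0])
    fix x assume "x \<in> space P"
    then have x: "x \<in> space M" using spP by simp
    show "- ereal C \<le> fstar f (\<gamma> x - \<nu>)" by (rule lb[of x \<gamma> B1, OF x B1[OF x]]) (simp add: C_def)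
  qed
  have m3: "(\<lambda>y. e2ennreal (fstar f (\<gamma> y - \<nu>) + ereal C)) \<in> borel_measurable M"
  proof -
    have "(\<lambda>y. e2ennreal (fstar f (\<gamma> y - \<nu>) + ereal C)) \<in> borel_measurable P"
      using mc[OF gm] by measurable
    then show ?thesis by (subst (asm) measurable_cong_sets[OF sP refl])
  qed
  have "(\<integral>\<^sup>+x. e2ennreal (fstar f (SK K \<gamma> x - \<nu>) + ereal C) \<partial>P)
      \<le> (\<integral>\<^sup>+x. (\<integral>\<^sup>+y. e2ennreal (fstar f (\<gamma> y - \<nu>) + ereal C) \<partial>K x) \<partial>P)"
  proof (rule nn_integral_mono)
    fix x assume "x \<in> space P"
    then have x: "x \<in> space M" using spP by simp
    have KP: "prob_space (K x)" and sK: "sets (K x) = sets M" using kernel_facts[OF K x] by auto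
    have ig: "integrable (K x) \<gamma>" using Mb_integrable[OF g KP sK] .
    have eqx: "SK K \<gamma> x - \<nu> = (\<integral>y. \<gamma> y - \<nu> \<partial>K x)"
    proof -
      have ic: "integrable (K x) (\<lambda>_. \<nu>)"
        using KP by (simp add: prob_space_def finite_measure.integrable_const)
      show ?thesis using KP
        by (simp add: SK_def Bochner_Integration.integral_diff[OF ig ic] prob_space.prob_space[OF KP])
    qed
    then show "e2ennreal (fstar f (SK K \<gamma> x - \<nu>) + ereal C)
        \<le> (\<integral>\<^sup>+y. e2ennreal (fstar f (\<gamma> y - \<nu>) + ereal C) \<partial>K x)"
    proof -
      have ih: "integrable (K x) (\<lambda>y. \<gamma> y - \<nu>)"
        using ig KP by (simp add: prob_space_def finite_measure.integrable_const)
      show ?thesis unfolding eqx by (rule fstar_jensen[where f=f, OF KP ih f1 C0])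
    qed
  qed
  also have "\<dots> = (\<integral>\<^sup>+x. e2ennreal (fstar f (\<gamma> x - \<nu>) + ereal C) \<partial>P)"
    using inv_nn_integral[OF K P m3] by simp
  finally have "enn2ereal (\<integral>\<^sup>+x. e2ennreal (fstar f (SK K \<gamma> x - \<nu>) + ereal C) \<partial>P)
     \<le> enn2ereal (\<integral>\<^sup>+x. e2ennreal (fstar f (\<gamma> x - \<nu>) + ereal C) \<partial>P)"
    by (subst less_eq_ennreal.rep_eq[symmetric])
  then show ?thesis unfolding e1 e2 by (rule ereal_minus_mono) (rule order_refl)
qed

lemma jensen_exp:
  fixes h :: "'a \<Rightarrow> real"
  assumes N: "prob_space N" and h: "integrable N h" and eh: "integrable N (\<lambda>x. exp (h x))"
  shows "exp (\<integral>x. h x \<partial>N) \<le> (\<integral>x. exp (h x) \<partial>N)"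
proof -
  interpret prob_space N by fact
  define m where "m = (\<integral>x. h x \<partial>N)"
  have pw: "exp m + exp m * (h x - m) \<le> exp (h x)" for x
  proof -
    have "exp m * (1 + (h x - m)) \<le> exp m * exp (h x - m)"
      using exp_ge_add_one_self[of "h x - m"] by (intro mult_left_mono) auto
    also have "\<dots> = exp (h x)" by (simp add: exp_diff)
    finally show ?thesis by (simp add: algebra_simps)
  qed
  have "(\<integral>x. exp m + exp m * (h x - m) \<partial>N) \<le> (\<integral>x. exp (h x) \<partial>N)"
    using h eh pw by (intro integral_mono) auto
  moreover have "(\<integral>x. exp m + exp m * (h x - m) \<partial>N) = exp m"
    using h by (simp add: prob_space m_def)
  ultimately show ?thesis by (simp add: m_def)
qed

lemma abs_integral_le:
  fixes g :: "'a \<Rightarrow> real"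
  assumes N: "prob_space N" and sN: "sets N = sets M" and g: "g \<in> borel_measurable M"
    and B: "\<And>x. x \<in> space M \<Longrightarrow> \<bar>g x\<bar> \<le> B"
  shows "\<bar>\<integral>x. g x \<partial>N\<bar> \<le> B"
proof -
  interpret prob_space N by fact
  have sp: "space N = space M" using sN by (rule sets_eq_imp_space_eq)
  have ig: "integrable N g" by (rule bdd_integrable[OF N sN g B])
  have "\<bar>\<integral>x. g x \<partial>N\<bar> \<le> (\<integral>x. \<bar>g x\<bar> \<partial>N)" by (rule integral_abs_bound)
  also have "\<dots> \<le> (\<integral>x. B \<partial>N)"
    using ig B sp by (intro integral_mono) auto
  also have "\<dots> = B" by (simp add: prob_space)
  finally show ?thesis .
qed

lemma inner_exp:
  assumes K: "prob_kernel M K" and A: "A \<in> invariant_probs M K"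
    and h: "h \<in> Mb M" and sh: "SK K h \<in> Mb M"
    and d: "d \<in> borel_measurable M" and d0: "\<forall>x\<in>space M. 0 \<le> d x"
    and dK: "\<forall>x\<in>space M. integrable (K x) d \<and> SK K d x = d x"
    and e: "0 < (\<epsilon>::real)"
  shows "(\<integral>x. exp ((SK K h x + a - d x) / \<epsilon>) \<partial>A) \<le> (\<integral>x. exp ((h x + a - d x) / \<epsilon>) \<partial>A)"
proof -
  from h obtain Bh where hm: "h \<in> borel_measurable M" and Bh: "\<And>x. x \<in> space M \<Longrightarrow> \<bar>h x\<bar> \<le> Bh"
    unfolding Mb_def by auto
  from sh obtain Bs where shm: "SK K h \<in> borel_measurable M" and Bs: "\<And>x. x \<in> space M \<Longrightarrow> \<bar>SK K h x\<bar> \<le> Bs"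
    unfolding Mb_def by auto
  have AP: "prob_space A" and sA: "sets A = sets M" and spA: "space A = space M"
    using probs_facts[OF A] by auto
  define G where "G = (\<lambda>y. exp ((h y + a - d y) / \<epsilon>))"
  have Gm: "G \<in> borel_measurable M" unfolding G_def using hm d by measurable
  have expb: "\<And>u B y. y \<in> space M \<Longrightarrow> \<bar>u y\<bar> \<le> B \<Longrightarrow> \<bar>exp ((u y + a - d y) / \<epsilon>)\<bar> \<le> exp ((B + \<bar>a\<bar>) / \<epsilon>)"
  proof -
    fix u :: "'a \<Rightarrow> real" and B y assume y: "y \<in> space M" and uB: "\<bar>u y\<bar> \<le> B"
    have "u y + a - d y \<le> B + \<bar>a\<bar>" using uB d0 y by auto
    then have "(u y + a - d y) / \<epsilon> \<le> (B + \<bar>a\<bar>) / \<epsilon>" using e by (simp add: divide_right_mono)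
    then show "\<bar>exp ((u y + a - d y) / \<epsilon>)\<bar> \<le> exp ((B + \<bar>a\<bar>) / \<epsilon>)" by simp
  qed
  have GB: "\<And>y. y \<in> space M \<Longrightarrow> \<bar>G y\<bar> \<le> exp ((Bh + \<bar>a\<bar>) / \<epsilon>)"
    unfolding G_def using expb Bh by blast
  have Lm: "(\<lambda>x. exp ((SK K h x + a - d x) / \<epsilon>)) \<in> borel_measurable M" using shm d by measurable
  have iL: "integrable A (\<lambda>x. exp ((SK K h x + a - d x) / \<epsilon>))"
    by (rule bdd_integrable[OF AP sA Lm]) (rule expb[OF _ Bs])
  have SKGm: "SK K G \<in> borel_measurable A"
    unfolding SK_def by (rule measurable_compose[OF kernel_meas[OF K A] integral_measurable_subprob_algebra[OF Gm]])
  have SKGB: "\<bar>SK K G x\<bar> \<le> exp ((Bh + \<bar>a\<bar>) / \<epsilon>)" if "x \<in> space M" for x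
    unfolding SK_def using kernel_facts[OF K that] by (intro abs_integral_le[OF _ _ Gm GB]) auto
  have iR: "integrable A (SK K G)"
  proof -
    interpret prob_space A by fact
    show ?thesis using SKGm SKGB spA
      by (intro integrable_const_bound[where B="exp ((Bh + \<bar>a\<bar>) / \<epsilon>)"] AE_I2) auto
  qed
  have "(\<integral>x. exp ((SK K h x + a - d x) / \<epsilon>) \<partial>A) \<le> (\<integral>x. SK K G x \<partial>A)"
  proof (intro integral_mono[OF iL iR])
    fix x assume "x \<in> space A"
    then have x: "x \<in> space M" using spA by simp
    have KP: "prob_space (K x)" and sK: "sets (K x) = sets M" using kernel_facts[OF K x] by auto
    have ih: "integrable (K x) h" by (rule Mb_integrable[OF h KP sK])
    have id: "integrable (K x) d" using dK x by auto
    have ic: "integrable (K x) (\<lambda>_. a)"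
      using KP by (simp add: prob_space_def finite_measure.integrable_const)
    have ihad: "integrable (K x) (\<lambda>y. h y + a - d y)" using ih id ic by auto
    have iF: "integrable (K x) (\<lambda>y. (h y + a - d y) / \<epsilon>)" using ihad by auto
    have "(\<integral>y. (h y + a - d y) / \<epsilon> \<partial>K x) = (\<integral>y. h y + a - d y \<partial>K x) / \<epsilon>"
      by (rule integral_divide_zero)
    also have "(\<integral>y. h y + a - d y \<partial>K x) = (\<integral>y. h y + a \<partial>K x) - (\<integral>y. d y \<partial>K x)"
      using ih id ic by (intro Bochner_Integration.integral_diff) auto
    also have "(\<integral>y. h y + a \<partial>K x) = (\<integral>y. h y \<partial>K x) + (\<integral>y. a \<partial>K x)"
      using ih ic by (intro Bochner_Integration.integral_add) auto
    also have "(\<integral>y. a \<partial>K x) = a" using prob_space.prob_space[OF KP] by simp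
    finally have eqF: "(\<integral>y. (h y + a - d y) / \<epsilon> \<partial>K x) = (SK K h x + a - d x) / \<epsilon>"
      using dK x by (simp add: SK_def)
    have iG: "integrable (K x) G" by (rule bdd_integrable[OF KP sK Gm GB])
    have "exp (\<integral>y. (h y + a - d y) / \<epsilon> \<partial>K x) \<le> (\<integral>y. exp ((h y + a - d y) / \<epsilon>) \<partial>K x)"
      using iG unfolding G_def by (intro jensen_exp[OF KP iF])
    then show "exp ((SK K h x + a - d x) / \<epsilon>) \<le> SK K G x"
      unfolding eqF by (simp add: SK_def G_def)
  qed
  also have "(\<integral>x. SK K G x \<partial>A) = (\<integral>x. G x \<partial>A)"
    using inv_integral[OF K A Gm, of "exp ((Bh + \<bar>a\<bar>) / \<epsilon>)"] GB by simp
  finally show ?thesis by (simp add: G_def)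
qed

lemma inner_exp':
  assumes K: "prob_kernel M K" and A: "A \<in> invariant_probs M K"
    and h: "h \<in> Mb M" and sh: "SK K h \<in> Mb M"
    and d: "d \<in> borel_measurable M" and d0: "\<forall>x\<in>space M. 0 \<le> d x"
    and dK: "\<forall>x\<in>space M. integrable (K x) d \<and> SK K d x = d x"
    and e: "0 < (\<epsilon>::real)"
  shows "(\<integral>x. exp ((a + SK K h x - d x) / \<epsilon>) \<partial>A) \<le> (\<integral>x. exp ((a + h x - d x) / \<epsilon>) \<partial>A)"
  using inner_exp[OF K A h sh d d0 dK e, of a] by (simp add: add.commute)

lemma sect1:
  assumes cm: "(\<lambda>z. c (fst z) (snd z)) \<in> borel_measurable (M \<Otimes>\<^sub>M M)" and y: "y \<in> space M"
  shows "(\<lambda>x. c x y) \<in> borel_measurable M"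
proof -
  have "(\<lambda>x. (x, y)) \<in> M \<rightarrow>\<^sub>M M \<Otimes>\<^sub>M M" using y by measurable
  from measurable_compose[OF this cm] show ?thesis by simp
qed

lemma sect2:
  assumes cm: "(\<lambda>z. c (fst z) (snd z)) \<in> borel_measurable (M \<Otimes>\<^sub>M M)" and x: "x \<in> space M"
  shows "(\<lambda>y. c x y) \<in> borel_measurable M"
proof -
  have "(\<lambda>y. (x, y)) \<in> M \<rightarrow>\<^sub>M M \<Otimes>\<^sub>M M" using x by measurable
  from measurable_compose[OF this cm] show ?thesis by simp
qed

lemma E_int:
  assumes A: "A \<in> invariant_probs M K" and B: "B \<in> invariant_probs M K"
    and cm: "(\<lambda>z. c (fst z) (snd z)) \<in> borel_measurable (M \<Otimes>\<^sub>M M)"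
    and c0: "\<forall>x y. 0 \<le> c x y" and e: "0 < (\<epsilon>::real)"
    and u: "u \<in> Mb M" and v: "v \<in> Mb M"
  shows "integrable (A \<Otimes>\<^sub>M B) (\<lambda>z. exp ((u (fst z) + v (snd z) - c (fst z) (snd z)) / \<epsilon>))"
proof -
  from u obtain Bu where um: "u \<in> borel_measurable M" and Bu: "\<And>x. x \<in> space M \<Longrightarrow> \<bar>u x\<bar> \<le> Bu"
    unfolding Mb_def by auto
  from v obtain Bv where vm: "v \<in> borel_measurable M" and Bv: "\<And>x. x \<in> space M \<Longrightarrow> \<bar>v x\<bar> \<le> Bv"
    unfolding Mb_def by auto
  have PA: "prob_space A" "sets A = sets M" using probs_facts[OF A] by auto
  have PB: "prob_space B" "sets B = sets M" using probs_facts[OF B] by auto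
  have PAB: "prob_space (A \<Otimes>\<^sub>M B)" using PA PB by (intro prob_space_pair) auto
  have sAB: "sets (A \<Otimes>\<^sub>M B) = sets (M \<Otimes>\<^sub>M M)" using PA PB by (intro sets_pair_measure_cong) auto
  have m1: "(\<lambda>z. u (fst z) + v (snd z) - c (fst z) (snd z)) \<in> borel_measurable (M \<Otimes>\<^sub>M M)"
    by (intro borel_measurable_diff borel_measurable_add cm measurable_compose[OF measurable_fst um]
        measurable_compose[OF measurable_snd vm])
  have m2: "(\<lambda>z. exp ((u (fst z) + v (snd z) - c (fst z) (snd z)) / \<epsilon>)) \<in> borel_measurable (M \<Otimes>\<^sub>M M)"
    using m1 by measurable
  show ?thesis
  proof (rule bdd_integrable[OF PAB sAB m2])
    fix z assume "z \<in> space (M \<Otimes>\<^sub>M M)"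
    then have z: "fst z \<in> space M" "snd z \<in> space M" by (auto simp: space_pair_measure)
    have "u (fst z) + v (snd z) - c (fst z) (snd z) \<le> Bu + Bv"
      using Bu[OF z(1)] Bv[OF z(2)] c0 by (smt (verit))
    then have "(u (fst z) + v (snd z) - c (fst z) (snd z)) / \<epsilon> \<le> (Bu + Bv) / \<epsilon>"
      using e by (simp add: divide_right_mono)
    then show "\<bar>exp ((u (fst z) + v (snd z) - c (fst z) (snd z)) / \<epsilon>)\<bar> \<le> exp ((Bu + Bv) / \<epsilon>)"
      by simp
  qed
qed

lemma E_le:
  assumes K: "prob_kernel M K" and A: "A \<in> invariant_probs M K" and B: "B \<in> invariant_probs M K"
    and cm: "(\<lambda>z. c (fst z) (snd z)) \<in> borel_measurable (M \<Otimes>\<^sub>M M)"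
    and c0: "\<forall>x y. 0 \<le> c x y" and e: "0 < (\<epsilon>::real)"
    and c1: "\<forall>x\<in>space M. \<forall>y\<in>space M. integrable (K x) (\<lambda>x'. c x' y) \<and> SK K (\<lambda>x'. c x' y) x = c x y"
    and c2: "\<forall>x\<in>space M. \<forall>y\<in>space M. integrable (K y) (\<lambda>y'. c x y') \<and> SK K (\<lambda>y'. c x y') y = c x y"
    and g1: "g1 \<in> Mb M" and g2: "g2 \<in> Mb M" and s1: "SK K g1 \<in> Mb M" and s2: "SK K g2 \<in> Mb M"
  shows "(\<integral>z. exp ((SK K g1 (fst z) + SK K g2 (snd z) - c (fst z) (snd z)) / \<epsilon>) \<partial>(A \<Otimes>\<^sub>M B))
     \<le> (\<integral>z. exp ((g1 (fst z) + g2 (snd z) - c (fst z) (snd z)) / \<epsilon>) \<partial>(A \<Otimes>\<^sub>M B))"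
proof -
  have PA: "prob_space A" and spA: "space A = space M" using probs_facts[OF A] by auto
  have PB: "prob_space B" and spB: "space B = space M" using probs_facts[OF B] by auto
  interpret pA: prob_space A by fact
  interpret pB: prob_space B by fact
  interpret pair_sigma_finite A B
    by (intro pair_sigma_finite.intro) (simp_all add: pA.sigma_finite_measure_axioms pB.sigma_finite_measure_axioms)
  define E where "E u v = (\<lambda>x y. exp ((u x + v y - c x y) / \<epsilon>))" for u v :: "'a \<Rightarrow> real"
  have Eint: "integrable (A \<Otimes>\<^sub>M B) (case_prod (E u v))" if "u \<in> Mb M" "v \<in> Mb M" for u v
  proof -
    have "integrable (A \<Otimes>\<^sub>M B) (\<lambda>z. exp ((u (fst z) + v (snd z) - c (fst z) (snd z)) / \<epsilon>))"
      by (rule E_int[OF A B cm c0 e that])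
    then show ?thesis by (simp add: E_def split_beta')
  qed
  have Eeq: "(\<integral>z. exp ((u (fst z) + v (snd z) - c (fst z) (snd z)) / \<epsilon>) \<partial>(A \<Otimes>\<^sub>M B))
      = integral\<^sup>L (A \<Otimes>\<^sub>M B) (case_prod (E u v))" for u v
    by (simp add: E_def split_beta')
  have step1: "integral\<^sup>L (A \<Otimes>\<^sub>M B) (case_prod (E (SK K g1) (SK K g2)))
      \<le> integral\<^sup>L (A \<Otimes>\<^sub>M B) (case_prod (E g1 (SK K g2)))"
  proof -
    have "integral\<^sup>L (A \<Otimes>\<^sub>M B) (case_prod (E (SK K g1) (SK K g2)))
        = (\<integral>y. (\<integral>x. E (SK K g1) (SK K g2) x y \<partial>A) \<partial>B)"
      using integral_snd[OF Eint[OF s1 s2]] by simp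
    also have "\<dots> \<le> (\<integral>y. (\<integral>x. E g1 (SK K g2) x y \<partial>A) \<partial>B)"
    proof (rule integral_mono)
      show "integrable B (\<lambda>y. \<integral>x. E (SK K g1) (SK K g2) x y \<partial>A)" by (rule integrable_snd[OF Eint[OF s1 s2]])
      show "integrable B (\<lambda>y. \<integral>x. E g1 (SK K g2) x y \<partial>A)" by (rule integrable_snd[OF Eint[OF g1 s2]])
      fix y assume "y \<in> space B"
      then have y: "y \<in> space M" using spB by simp
      show "(\<integral>x. E (SK K g1) (SK K g2) x y \<partial>A) \<le> (\<integral>x. E g1 (SK K g2) x y \<partial>A)"
        unfolding E_def
        by (rule inner_exp[OF K A g1 s1 sect1[OF cm y]]) (use c0 c1 y e in auto)
    qed
    also have "\<dots> = integral\<^sup>L (A \<Otimes>\<^sub>M B) (case_prod (E g1 (SK K g2)))"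
      using integral_snd[OF Eint[OF g1 s2]] by simp
    finally show ?thesis .
  qed
  have step2: "integral\<^sup>L (A \<Otimes>\<^sub>M B) (case_prod (E g1 (SK K g2)))
      \<le> integral\<^sup>L (A \<Otimes>\<^sub>M B) (case_prod (E g1 g2))"
  proof -
    have "integral\<^sup>L (A \<Otimes>\<^sub>M B) (case_prod (E g1 (SK K g2)))
        = (\<integral>x. (\<integral>y. E g1 (SK K g2) x y \<partial>B) \<partial>A)"
      using integral_fst[OF Eint[OF g1 s2]] by simp
    also have "\<dots> \<le> (\<integral>x. (\<integral>y. E g1 g2 x y \<partial>B) \<partial>A)"
    proof (rule integral_mono)
      show "integrable A (\<lambda>x. \<integral>y. E g1 (SK K g2) x y \<partial>B)" by (rule integrable_fst[OF Eint[OF g1 s2]])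
      show "integrable A (\<lambda>x. \<integral>y. E g1 g2 x y \<partial>B)" by (rule integrable_fst[OF Eint[OF g1 g2]])
      fix x assume "x \<in> space A"
      then have x: "x \<in> space M" using spA by simp
      show "(\<integral>y. E g1 (SK K g2) x y \<partial>B) \<le> (\<integral>y. E g1 g2 x y \<partial>B)"
        unfolding E_def
        by (rule inner_exp'[OF K B g2 s2 sect2[OF cm x]]) (use c0 c2 x e in auto)
    qed
    also have "\<dots> = integral\<^sup>L (A \<Otimes>\<^sub>M B) (case_prod (E g1 g2))"
      using integral_fst[OF Eint[OF g1 g2]] by simp
    finally show ?thesis .
  qed
  show ?thesis unfolding Eeq using step1 step2 by linarith
qed

lemma SUP_transfer:
  fixes T :: "'b \<Rightarrow> ereal"
  assumes sub: "F ` G \<subseteq> G" and le: "\<And>g. g \<in> G \<Longrightarrow> T g \<le> T (F g)"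
  shows "(SUP g\<in>G. T g) = (SUP g\<in>F ` G. T g)"
proof (rule antisym)
  show "(SUP g\<in>G. T g) \<le> (SUP g\<in>F ` G. T g)"
    using le by (intro SUP_mono) blast
  show "(SUP g\<in>F ` G. T g) \<le> (SUP g\<in>G. T g)"
    using sub by (rule SUP_subset_mono) simp
qed

lemma Wce_eq:
  assumes K: "prob_kernel M K" and A: "A \<in> invariant_probs M K" and B: "B \<in> invariant_probs M K"
    and cm: "(\<lambda>z. c (fst z) (snd z)) \<in> borel_measurable (M \<Otimes>\<^sub>M M)"
    and c0: "\<forall>x y. 0 \<le> c x y" and e: "0 < (\<epsilon>::real)"
    and G: "G \<subseteq> Mb M \<times> Mb M" and sub: "SK2 K ` G \<subseteq> G"
    and c1: "\<forall>x\<in>space M. \<forall>y\<in>space M. integrable (K x) (\<lambda>x'. c x' y) \<and> SK K (\<lambda>x'. c x' y) x = c x y"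
    and c2: "\<forall>x\<in>space M. \<forall>y\<in>space M. integrable (K y) (\<lambda>y'. c x y') \<and> SK K (\<lambda>y'. c x y') y = c x y"
  shows "Wce c \<epsilon> G B A = Wce c \<epsilon> (SK2 K ` G) B A"
  unfolding Wce_def
proof (rule SUP_transfer[OF sub])
  fix g assume g: "g \<in> G"
  have g12: "fst g \<in> Mb M" "snd g \<in> Mb M" using g G by auto
  have "SK2 K g \<in> G" using sub g by auto
  then have s12: "SK K (fst g) \<in> Mb M" "SK K (snd g) \<in> Mb M" using G by (auto simp: SK2_def)
  have i1: "(\<integral>x. SK K (fst g) x \<partial>A) = (\<integral>x. fst g x \<partial>A)"
    using g12(1) unfolding Mb_def by (auto intro!: inv_integral[OF K A, symmetric])
  have i2: "(\<integral>x. SK K (snd g) x \<partial>B) = (\<integral>x. snd g x \<partial>B)"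
    using g12(2) unfolding Mb_def by (auto intro!: inv_integral[OF K B, symmetric])
  have El: "(\<integral>z. exp ((SK K (fst g) (fst z) + SK K (snd g) (snd z) - c (fst z) (snd z)) / \<epsilon>) \<partial>(A \<Otimes>\<^sub>M B))
     \<le> (\<integral>z. exp ((fst g (fst z) + snd g (snd z) - c (fst z) (snd z)) / \<epsilon>) \<partial>(A \<Otimes>\<^sub>M B))"
    by (rule E_le[OF K A B cm c0 e c1 c2 g12 s12])
  then have "\<epsilon> * (\<integral>z. exp ((SK K (fst g) (fst z) + SK K (snd g) (snd z) - c (fst z) (snd z)) / \<epsilon>) \<partial>(A \<Otimes>\<^sub>M B))
     \<le> \<epsilon> * (\<integral>z. exp ((fst g (fst z) + snd g (snd z) - c (fst z) (snd z)) / \<epsilon>) \<partial>(A \<Otimes>\<^sub>M B))"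
    using e by (intro mult_left_mono) auto
  then show "ereal ((\<integral>x. fst g x \<partial>A) + (\<integral>y. snd g y \<partial>B) -
          \<epsilon> * (\<integral>z. exp ((fst g (fst z) + snd g (snd z) - c (fst z) (snd z)) / \<epsilon>) \<partial>(A \<Otimes>\<^sub>M B)) + \<epsilon>)
       \<le> ereal ((\<integral>x. fst (SK2 K g) x \<partial>A) + (\<integral>y. snd (SK2 K g) y \<partial>B) -
          \<epsilon> * (\<integral>z. exp ((fst (SK2 K g) (fst z) + snd (SK2 K g) (snd z) - c (fst z) (snd z)) / \<epsilon>) \<partial>(A \<Otimes>\<^sub>M B)) + \<epsilon>)"
    unfolding SK2_def fst_conv snd_conv i1 i2 by simp
qed

lemma Df_eq:
  assumes K: "prob_kernel M K" and Q: "Q \<in> invariant_probs M K" and P: "P \<in> invariant_probs M K"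
    and f1: "f 1 = 0" and G: "G \<subseteq> Mb M" and sub: "SK K ` G \<subseteq> G"
  shows "Df f G Q P = Df f (SK K ` G) Q P"
  unfolding Df_def
proof (rule SUP_transfer[OF sub])
  fix g assume g: "g \<in> G"
  have gM: "g \<in> Mb M" using g G by auto
  have sM: "SK K g \<in> Mb M" using g G sub by auto
  have i1: "(\<integral>x. SK K g x \<partial>Q) = (\<integral>x. g x \<partial>Q)"
    using gM unfolding Mb_def by (auto intro!: inv_integral[OF K Q, symmetric])
  have "(INF \<nu>. ereal \<nu> + eintegral P (\<lambda>x. fstar f (SK K g x - \<nu>)))
      \<le> (INF \<nu>. ereal \<nu> + eintegral P (\<lambda>x. fstar f (g x - \<nu>)))"
  proof (rule INF_mono)
    fix m :: real
    show "\<exists>n\<in>UNIV. ereal n + eintegral P (\<lambda>x. fstar f (SK K g x - n))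
        \<le> ereal m + eintegral P (\<lambda>x. fstar f (g x - m))"
      by (rule bexI[of _ m], rule add_left_mono, rule Df_term_le[where f=f, OF K P f1 gM sM]) simp
  qed
  then show "ereal (\<integral>x. g x \<partial>Q) - (INF \<nu>. ereal \<nu> + eintegral P (\<lambda>x. fstar f (g x - \<nu>)))
      \<le> ereal (\<integral>x. SK K g x \<partial>Q) - (INF \<nu>. ereal \<nu> + eintegral P (\<lambda>x. fstar f (SK K g x - \<nu>)))"
    unfolding i1 by (rule ereal_minus_mono[OF order_refl])
qed

lemma WG_eq:
  assumes K: "prob_kernel M K" and Q: "Q \<in> invariant_probs M K" and P: "P \<in> invariant_probs M K"
    and G: "G \<subseteq> Mb M" and sub: "SK K ` G \<subseteq> G"
  shows "WG G Q P = WG (SK K ` G) Q P"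
  unfolding WG_def
proof (rule SUP_transfer[OF sub])
  fix g assume g: "g \<in> G"
  have gM: "g \<in> Mb M" using g G by auto
  have i1: "(\<integral>x. SK K g x \<partial>Q) = (\<integral>x. g x \<partial>Q)"
    using gM unfolding Mb_def by (auto intro!: inv_integral[OF K Q, symmetric])
  have i2: "(\<integral>x. SK K g x \<partial>P) = (\<integral>x. g x \<partial>P)"
    using gM unfolding Mb_def by (auto intro!: inv_integral[OF K P, symmetric])
  show "ereal ((\<integral>x. g x \<partial>Q) - (\<integral>x. g x \<partial>P)) \<le> ereal ((\<integral>x. SK K g x \<partial>Q) - (\<integral>x. SK K g x \<partial>P))"
    unfolding i1 i2 by simp
qed

theorem theorem3:
  fixes M :: "'a measure" and K :: "'a \<Rightarrow> 'a measure" and Q P :: "'a measure"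
  assumes K: "prob_kernel M K"
    and QP: "Q \<in> invariant_probs M K" "P \<in> invariant_probs M K"
  shows
    "(\<forall>(f::real \<Rightarrow> real) \<Gamma>. admissible_f f \<longrightarrow> \<Gamma> \<subseteq> Mb M \<longrightarrow> SK K ` \<Gamma> \<subseteq> \<Gamma> \<longrightarrow>
        Df f \<Gamma> Q P = Df f (SK K ` \<Gamma>) Q P \<and> WG \<Gamma> Q P = WG (SK K ` \<Gamma>) Q P)
   \<and> (\<forall>(c::'a \<Rightarrow> 'a \<Rightarrow> real) (\<epsilon>::real) \<Gamma>.
        (\<lambda>z. c (fst z) (snd z)) \<in> borel_measurable (M \<Otimes>\<^sub>M M) \<longrightarrow>
        (\<forall>x y. 0 \<le> c x y) \<longrightarrow> 0 < \<epsilon> \<longrightarrow>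
        \<Gamma> \<subseteq> Mb M \<times> Mb M \<longrightarrow> SK2 K ` \<Gamma> \<subseteq> \<Gamma> \<longrightarrow>
        (\<forall>x\<in>space M. \<forall>y\<in>space M.
           integrable (K x) (\<lambda>x'. c x' y) \<and> SK K (\<lambda>x'. c x' y) x = c x y) \<longrightarrow>
        (\<forall>x\<in>space M. \<forall>y\<in>space M.
           integrable (K y) (\<lambda>y'. c x y') \<and> SK K (\<lambda>y'. c x y') y = c x y) \<longrightarrow>
        SD c \<epsilon> \<Gamma> Q P = SD c \<epsilon> (SK2 K ` \<Gamma>) Q P)
   \<and> (\<forall>\<Gamma>. \<Gamma> \<subseteq> Mb M \<longrightarrow> (\<forall>g\<in>Mb M. SK K (SK K g) = SK K g) \<longrightarrow> SK K ` \<Gamma> \<subseteq> \<Gamma> \<longrightarrow>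
        SK K ` \<Gamma> = {\<gamma>\<in>\<Gamma>. SK K \<gamma> = \<gamma>})
   \<and> (\<forall>\<Gamma>. \<Gamma> \<subseteq> Mb M \<times> Mb M \<longrightarrow> (\<forall>g\<in>Mb M. SK K (SK K g) = SK K g) \<longrightarrow> SK2 K ` \<Gamma> \<subseteq> \<Gamma> \<longrightarrow>
        SK2 K ` \<Gamma> = {\<gamma>\<in>\<Gamma>. SK2 K \<gamma> = \<gamma>})"
proof (intro conjI allI impI)
  fix f :: "real \<Rightarrow> real" and G
  assume af: "admissible_f f" and G: "G \<subseteq> Mb M" and sub: "SK K ` G \<subseteq> G"
  have f1: "f 1 = 0" using af by (simp add: admissible_f_def)
  show "Df f G Q P = Df f (SK K ` G) Q P" by (rule Df_eq[where f=f, OF K QP f1 G sub])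
  show "WG G Q P = WG (SK K ` G) Q P" by (rule WG_eq[OF K QP G sub])
next
  fix c :: "'a \<Rightarrow> 'a \<Rightarrow> real" and \<epsilon> :: real and G
  assume cm: "(\<lambda>z. c (fst z) (snd z)) \<in> borel_measurable (M \<Otimes>\<^sub>M M)"
    and c0: "\<forall>x y. 0 \<le> c x y" and e: "0 < \<epsilon>"
    and G: "G \<subseteq> Mb M \<times> Mb M" and sub: "SK2 K ` G \<subseteq> G"
    and c1: "\<forall>x\<in>space M. \<forall>y\<in>space M. integrable (K x) (\<lambda>x'. c x' y) \<and> SK K (\<lambda>x'. c x' y) x = c x y"
    and c2: "\<forall>x\<in>space M. \<forall>y\<in>space M. integrable (K y) (\<lambda>y'. c x y') \<and> SK K (\<lambda>y'. c x y') y = c x y"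
  note W = Wce_eq[OF K _ _ cm c0 e G sub c1 c2]
  show "SD c \<epsilon> G Q P = SD c \<epsilon> (SK2 K ` G) Q P"
    unfolding SD_def W[OF QP(2) QP(1)] W[OF QP(1) QP(1)] W[OF QP(2) QP(2)] ..
next
  fix G
  assume G: "G \<subseteq> Mb M" and idem: "\<forall>g\<in>Mb M. SK K (SK K g) = SK K g" and sub: "SK K ` G \<subseteq> G"
  show "SK K ` G = {\<gamma> \<in> G. SK K \<gamma> = \<gamma>}"
  proof (rule set_eqI, rule iffI)
    fix x assume "x \<in> SK K ` G"
    then obtain g where g: "g \<in> G" "x = SK K g" by auto
    then show "x \<in> {\<gamma> \<in> G. SK K \<gamma> = \<gamma>}" using sub idem G by auto
  next
    fix x assume "x \<in> {\<gamma> \<in> G. SK K \<gamma> = \<gamma>}"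
    then show "x \<in> SK K ` G" by (auto intro: image_eqI[where x=x])
  qed
next
  fix G
  assume G: "G \<subseteq> Mb M \<times> Mb M" and idem: "\<forall>g\<in>Mb M. SK K (SK K g) = SK K g" and sub: "SK2 K ` G \<subseteq> G"
  show "SK2 K ` G = {\<gamma> \<in> G. SK2 K \<gamma> = \<gamma>}"
  proof (rule set_eqI, rule iffI)
    fix x assume "x \<in> SK2 K ` G"
    then obtain g where g: "g \<in> G" "x = SK2 K g" by auto
    have "fst g \<in> Mb M" "snd g \<in> Mb M" using g G by auto
    then have "SK2 K (SK2 K g) = SK2 K g" using idem by (simp add: SK2_def)
    then show "x \<in> {\<gamma> \<in> G. SK2 K \<gamma> = \<gamma>}" using sub g by auto
  next
    fix x assume "x \<in> {\<gamma> \<in> G. SK2 K \<gamma> = \<gamma>}"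
    then show "x \<in> SK2 K ` G" by (auto intro: image_eqI[where x=x])
  qed
qed

end
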